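(* Let $n\ge 2$ and let $\overrightarrow{K_{1,n}}$ be an orientation of the star $K_{1,n}$. Then $\overrightarrow{K_{1,n}}$ is $\{1,2\}$-antimagic if and only if $n=2$ and its center is neither a source nor a sink.
   Context: An oriented graph $\overrightarrow{G}$ is a directed graph obtained from a simple undirected graph by giving each edge one direction. For vertices $u,v$, $d(u,v)$ is the length of a shortest directed path from $u$ to $v$ ($d(u,u)=0$, and $d(u,v)=\infty$ if there is no such path). Let $\partial=\max\{d(u,v)<\infty : u,v\in V(\overrightarrow{G})\}$. A distance set is a nonempty $D\subseteq\{0,1,\dots,\partial\}$. The $D$-neighborhood of $u$ is $N_D(u)=\{v : d(u,v)\in D\}$. For a bijection $f:V(\overrightarrow{G})\to\{1,\dots,|V(\overrightarrow{G})|\}$, the $D$-weight of $u$ is $\omega_D(u)=\sum_{v\in N_D(u)} f(v)$ (empty sum $=0$). $\overrightarrow{G}$ is $D$-antimagic if $D\subseteq\{0,\dots,\partial\}$ (so $\{1,2\}$-antimagic requires $\partial\ge 2$) and there is such a bijection $f$ with all $D$-weights pairwise distinct. The center of $\overrightarrow{K_{1,n}}$ is its vertex of degree $n$; a source is a vertex of in-degree $0$ and a sink a vertex of out-degree $0$. *)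

theory Defs
  imports Main
begin

definition oriented_graph :: "'a set \<Rightarrow> ('a \<times> 'a) set \<Rightarrow> bool" where
  "oriented_graph V A \<longleftrightarrow> finite V \<and> A \<subseteq> V \<times> V \<and>
     (\<forall>u v. (u, v) \<in> A \<longrightarrow> u \<noteq> v \<and> (v, u) \<notin> A)"

definition dist_is :: "('a \<times> 'a) set \<Rightarrow> 'a \<Rightarrow> 'a \<Rightarrow> nat \<Rightarrow> bool" where
  "dist_is A u v k \<longleftrightarrow> (u, v) \<in> A ^^ k \<and> (\<forall>j<k. (u, v) \<notin> A ^^ j)"

definition max_fin_dist :: "'a set \<Rightarrow> ('a \<times> 'a) set \<Rightarrow> nat" where
  "max_fin_dist V A = Max {k. \<exists>u\<in>V. \<exists>v\<in>V. dist_is A u v k}"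

definition D_nbhd :: "'a set \<Rightarrow> ('a \<times> 'a) set \<Rightarrow> nat set \<Rightarrow> 'a \<Rightarrow> 'a set" where
  "D_nbhd V A D u = {v \<in> V. \<exists>k\<in>D. dist_is A u v k}"

definition D_weight :: "'a set \<Rightarrow> ('a \<times> 'a) set \<Rightarrow> nat set \<Rightarrow> ('a \<Rightarrow> nat) \<Rightarrow> 'a \<Rightarrow> nat" where
  "D_weight V A D f u = (\<Sum>v\<in>D_nbhd V A D u. f v)"

definition D_antimagic :: "'a set \<Rightarrow> ('a \<times> 'a) set \<Rightarrow> nat set \<Rightarrow> bool" where
  "D_antimagic V A D \<longleftrightarrow> D \<noteq> {} \<and> D \<subseteq> {0..max_fin_dist V A} \<and>
     (\<exists>f. bij_betw f V {1..card V} \<and> inj_on (D_weight V A D f) V)"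

definition oriented_star :: "'a set \<Rightarrow> ('a \<times> 'a) set \<Rightarrow> 'a \<Rightarrow> nat \<Rightarrow> bool" where
  "oriented_star V A c n \<longleftrightarrow> oriented_graph V A \<and> c \<in> V \<and> card V = n + 1 \<and>
     A \<subseteq> ({c} \<times> (V - {c})) \<union> ((V - {c}) \<times> {c}) \<and>
     (\<forall>v \<in> V - {c}. (c, v) \<in> A \<or> (v, c) \<in> A)"

definition is_source :: "('a \<times> 'a) set \<Rightarrow> 'a \<Rightarrow> bool" where
  "is_source A u \<longleftrightarrow> (\<forall>w. (w, u) \<notin> A)"

definition is_sink :: "('a \<times> 'a) set \<Rightarrow> 'a \<Rightarrow> bool" where
  "is_sink A u \<longleftrightarrow> (\<forall>w. (u, w) \<notin> A)"

end

theory Submission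
  imports Defs
begin

lemma star_arc:
  assumes "oriented_star V A c n" "(u,v) \<in> A"
  shows "(u = c \<and> v \<in> V - {c}) \<or> (v = c \<and> u \<in> V - {c})"
  using assms unfolding oriented_star_def by blast

lemma star_noopp:
  assumes "oriented_star V A c n" "(u,v) \<in> A"
  shows "(v,u) \<notin> A \<and> u \<noteq> v"
  using assms unfolding oriented_star_def oriented_graph_def by blast

lemma star_pow2:
  assumes "oriented_star V A c n"
  shows "A ^^ 2 = {(x,z). (x,c) \<in> A \<and> (c,z) \<in> A}"
proof -
  have "A ^^ 2 = A O A" by (simp add: numeral_2_eq_2)
  also have "\<dots> = {(x,z). (x,c) \<in> A \<and> (c,z) \<in> A}"
  proof (auto)
    fix x y z assume a: "(x,y) \<in> A" "(y,z) \<in> A"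
    show "(x,c) \<in> A" using star_arc[OF assms a(1)] star_arc[OF assms a(2)]
        star_noopp[OF assms a(1)] a by blast
    show "(c,z) \<in> A" using star_arc[OF assms a(1)] star_arc[OF assms a(2)]
        star_noopp[OF assms a(1)] a by blast
  qed
  finally show ?thesis .
qed

lemma star_pow3:
  assumes "oriented_star V A c n" "k \<ge> 3"
  shows "A ^^ k = {}"
proof -
  have "A ^^ 3 = A ^^ 2 O A" by (simp add: numeral_3_eq_3 numeral_2_eq_2)
  also have "\<dots> = {}"
  proof (auto simp: star_pow2[OF assms(1)])
    fix x y z assume a: "(x,c) \<in> A" "(c,y) \<in> A" "(y,z) \<in> A"
    show False using star_arc[OF assms(1) a(3)] star_noopp[OF assms(1) a(2)]
        star_noopp[OF assms(1) a(1)] a by blast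
  qed
  finally have "A ^^ 3 = {}" .
  moreover have "A ^^ k = A ^^ (k - 3) O A ^^ 3"
    using assms(2) by (metis le_add_diff_inverse2 relpow_add)
  ultimately show ?thesis by simp
qed

lemma dist1:
  assumes "oriented_star V A c n"
  shows "dist_is A u v 1 \<longleftrightarrow> (u,v) \<in> A"
  using star_noopp[OF assms] unfolding dist_is_def by auto

lemma dist2:
  assumes "oriented_star V A c n"
  shows "dist_is A u v 2 \<longleftrightarrow> (u,c) \<in> A \<and> (c,v) \<in> A"
proof -
  have "j < 2 \<longleftrightarrow> j = 0 \<or> j = 1" for j :: nat by auto
  then have "dist_is A u v 2 \<longleftrightarrow> (u,v) \<in> A^^2 \<and> u \<noteq> v \<and> (u,v) \<notin> A"
    unfolding dist_is_def by auto
  then show ?thesis using star_pow2[OF assms] star_arc[OF assms] star_noopp[OF assms]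
    by blast
qed

lemma dist3:
  assumes "oriented_star V A c n" "k \<ge> 3"
  shows "\<not> dist_is A u v k"
  using star_pow3[OF assms] unfolding dist_is_def by auto

lemma nbhd:
  assumes "oriented_star V A c n"
  shows "D_nbhd V A {1,2} u = {v \<in> V. (u,v) \<in> A \<or> ((u,c) \<in> A \<and> (c,v) \<in> A)}"
  unfolding D_nbhd_def using dist1[OF assms] dist2[OF assms] by auto

lemma distset:
  assumes "oriented_star V A c n"
  shows "{k. \<exists>u\<in>V. \<exists>v\<in>V. dist_is A u v k} \<subseteq> {0,1,2}"
proof
  fix k assume "k \<in> {k. \<exists>u\<in>V. \<exists>v\<in>V. dist_is A u v k}"
  then obtain u v where "dist_is A u v k" by auto
  then have "\<not> k \<ge> 3" using dist3[OF assms] by blast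
  then show "k \<in> {0,1,2}" by auto
qed

theorem mainTheorem5:
  fixes V :: "'a set" and A :: "('a \<times> 'a) set" and c :: 'a and n :: nat
  assumes "n \<ge> 2" and "oriented_star V A c n"
  shows "D_antimagic V A {1, 2} \<longleftrightarrow> n = 2 \<and> \<not> is_source A c \<and> \<not> is_sink A c"
proof -
  note st = assms(2)
  let ?S = "{k. \<exists>u\<in>V. \<exists>v\<in>V. dist_is A u v k}"
  have finS: "finite ?S" using distset[OF st] finite_subset by blast
  have finV: "finite V" and cV: "c \<in> V" and cardV: "card V = n + 1"
    and leaves: "\<forall>v \<in> V - {c}. (c, v) \<in> A \<or> (v, c) \<in> A"
    using st unfolding oriented_star_def oriented_graph_def by auto
  show ?thesis
  proof
    assume H: "D_antimagic V A {1, 2}"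
    then have "2 \<le> Max ?S" unfolding D_antimagic_def max_fin_dist_def by auto
    moreover have "?S \<noteq> {}"
    proof -
      have "dist_is A c c 0" unfolding dist_is_def by simp
      then show ?thesis using cV by blast
    qed
    ultimately have "Max ?S \<in> ?S" "Max ?S \<ge> 2" using finS Max_in by blast+
    then obtain u v where "dist_is A u v 2"
      using distset[OF st] by fastforce
    then have uc: "(u,c) \<in> A" and cv: "(c,v) \<in> A" using dist2[OF st] by auto
    have ns: "\<not> is_source A c \<and> \<not> is_sink A c"
      using uc cv unfolding is_source_def is_sink_def by blast
    from H obtain f where bij: "bij_betw f V {1..card V}" and inj: "inj_on (D_weight V A {1,2} f) V"
      unfolding D_antimagic_def by auto
    have fpos: "x \<in> V \<Longrightarrow> f x \<ge> 1" for x using bij unfolding bij_betw_def by auto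
    define Os where "Os = {x \<in> V - {c}. (c,x) \<in> A}"
    define Is where "Is = {x \<in> V - {c}. (x,c) \<in> A}"
    have "V - {c} = Os \<union> Is" using leaves unfolding Os_def Is_def by auto
    then have "card (V - {c}) \<le> card Os + card Is" by (metis card_Un_le)
    moreover have "card (V - {c}) = n" using cardV cV finV by simp
    moreover have "card Os \<le> 1"
    proof -
      have "x \<in> Os \<Longrightarrow> D_weight V A {1,2} f x = 0" for x
      proof -
        assume "x \<in> Os"
        then have "(c,x) \<in> A" by (simp add: Os_def)
        then have "D_nbhd V A {1,2} x = {}" unfolding nbhd[OF st]
          using star_arc[OF st] star_noopp[OF st] by blast
        then show ?thesis unfolding D_weight_def by simp
      qed
      moreover have "Os \<subseteq> V" by (auto simp: Os_def)
      ultimately have "\<forall>x\<in>Os. \<forall>y\<in>Os. x = y" using inj unfolding inj_on_def by (metis subsetD)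
      then show ?thesis by (metis card_le_Suc0_iff_eq finV finite_subset \<open>Os \<subseteq> V\<close> One_nat_def)
    qed
    moreover have "card Is \<le> 1"
    proof -
      have "x \<in> Is \<Longrightarrow> D_nbhd V A {1,2} x = {w \<in> V. w = c \<or> (c,w) \<in> A}" for x
      proof -
        assume "x \<in> Is"
        then have "(x,c) \<in> A" by (simp add: Is_def)
        then show ?thesis unfolding nbhd[OF st]
          using star_arc[OF st] star_noopp[OF st] by blast
      qed
      then have "x \<in> Is \<Longrightarrow> y \<in> Is \<Longrightarrow> D_weight V A {1,2} f x = D_weight V A {1,2} f y" for x y
        unfolding D_weight_def by simp
      moreover have "Is \<subseteq> V" by (auto simp: Is_def)
      ultimately have "\<forall>x\<in>Is. \<forall>y\<in>Is. x = y" using inj unfolding inj_on_def by (metis subsetD)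
      then show ?thesis by (metis card_le_Suc0_iff_eq finV finite_subset \<open>Is \<subseteq> V\<close> One_nat_def)
    qed
    ultimately show "n = 2 \<and> \<not> is_source A c \<and> \<not> is_sink A c" using ns assms(1) by linarith
  next
    assume H: "n = 2 \<and> \<not> is_source A c \<and> \<not> is_sink A c"
    then obtain i ov where ic: "(i,c) \<in> A" and co: "(c,ov) \<in> A"
      unfolding is_source_def is_sink_def by blast
    have iV: "i \<in> V - {c}" and oV: "ov \<in> V - {c}" using star_arc[OF st ic] star_arc[OF st co] by auto
    have io: "i \<noteq> ov" using star_noopp[OF st ic] co by auto
    have V3: "V = {c,i,ov}"
    proof -
      have "{c,i,ov} \<subseteq> V" using iV oV cV by auto
      moreover have "card {c,i,ov} = 3" using iV oV io by auto
      ultimately show ?thesis using cardV H finV by (metis card_subset_eq numeral_3_eq_3 add_2_eq_Suc' One_nat_def numeral_2_eq_2 Suc_1 add.commute plus_1_eq_Suc)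
    qed
    have "dist_is A i ov 2" using dist2[OF st] ic co by auto
    then have "2 \<in> ?S" using iV oV by blast
    then have "2 \<le> max_fin_dist V A" unfolding max_fin_dist_def using finS by auto
    then have Dsub: "{1,2} \<subseteq> {0..max_fin_dist V A}" by auto
    define f where "f = (\<lambda>x. if x = c then 1 else if x = i then 2 else (3::nat))"
    have "bij_betw f V {1..card V}"
    proof -
      have "card V = 3" using cardV H by simp
      moreover have "{1..3::nat} = {1,2,3}" by auto
      ultimately show ?thesis unfolding V3 bij_betw_def inj_on_def f_def using iV oV io by auto
    qed
    moreover have "inj_on (D_weight V A {1,2} f) V"
    proof -
      have nc: "D_nbhd V A {1,2} c = {ov}"
        unfolding nbhd[OF st] using V3 co ic star_noopp[OF st] star_arc[OF st] iV oV io by auto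
      have ni: "D_nbhd V A {1,2} i = {c,ov}"
        unfolding nbhd[OF st] using V3 co ic star_noopp[OF st] star_arc[OF st] iV oV io by auto
      have no: "D_nbhd V A {1,2} ov = {}"
        unfolding nbhd[OF st] using V3 co ic star_noopp[OF st] star_arc[OF st] iV oV io by auto
      have "D_weight V A {1,2} f c = 3" "D_weight V A {1,2} f i = 4" "D_weight V A {1,2} f ov = 0"
        unfolding D_weight_def nc ni no f_def using iV oV io by auto
      then show ?thesis unfolding V3 inj_on_def by auto
    qed
    ultimately show "D_antimagic V A {1, 2}" unfolding D_antimagic_def using Dsub by blast
  qed
qed

end
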